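(* Define the integer sequence $(w_n)_{n\geq 1}$ by $w_1=1$ and, for $n\geq 1$, $$w_{n+1}=\begin{cases}\left\lfloor \sqrt{2}\,\left(w_n+1-\frac{\pi^2}{e^3}\right)\right\rfloor, & n \text{ odd},\\ \left\lfloor \sqrt{2}\,\left(w_n+\tfrac12\right)\right\rfloor, & n \text{ even}.\end{cases}$$ Then for every $n\geq 31$, $w_{2n+1}-2w_{2n-1}$ equals the $(n+1)$th binary digit of $759250125\sqrt{2}$.
   Context: $\lfloor x\rfloor$ denotes the greatest integer $\leq x$. Binary digits of a positive real number are counted from the most significant one: writing $759250125\sqrt{2}=\sum_{j\geq 1} b_j\,2^{30-(j-1)}$ with $b_j\in\{0,1\}$ and $b_1=1$ (the integer part of $759250125\sqrt{2}$ lies in $[2^{30},2^{31})$), the $j$th binary digit is $b_j$. *)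

theory Defs
  imports Complex_Main
begin

text \<open>The sequence w, indexed from 1 (the value at index 0 is irrelevant and set to 0).
  w (n+1) is computed from w n with the case split on the parity of n.\<close>
fun w :: "nat \<Rightarrow> int" where
  "w 0 = 0"
| "w (Suc 0) = 1"
| "w (Suc (Suc m)) =
     (if odd (Suc m)
      then \<lfloor>sqrt 2 * (real_of_int (w (Suc m)) + 1 - pi^2 / exp 3)\<rfloor>
      else \<lfloor>sqrt 2 * (real_of_int (w (Suc m)) + 1/2)\<rfloor>)"

text \<open>The j-th binary digit (j \<ge> 1, counted from the most significant one) of a positive
  real x: writing x = sum_{j\<ge>1} b_j 2^(e-(j-1)) with e = floor(log2 x) and b_1 = 1,
  we have b_j = floor(x * 2^((j-1)-e)) mod 2.\<close>
definition binary_digit :: "real \<Rightarrow> nat \<Rightarrow> int" where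
  "binary_digit x j = \<lfloor>x * 2 powi (int j - 1 - \<lfloor>log 2 x\<rfloor>)\<rfloor> mod 2"

end

theory Submission
  imports Defs "HOL-Analysis.Complex_Transcendental"
begin

definition cc :: real where "cc = 1 - pi^2 / exp 3"

lemma cc_bounds: "502/1000 \<le> cc" "cc \<le> 51/100"
proof -
  have p1: "3.141592653588 \<le> pi" "pi \<le> 3.1415926535899" by (rule pi_approx)+
  have e: "\<bar>exp(1) - 5837465777 / 2147483648\<bar> \<le> (inverse(2 ^ 32)::real)" by (rule e_approx_32)
  have e3: "exp (3::real) = exp 1 ^ 3"
    by (metis exp_of_nat_mult mult.right_neutral of_nat_numeral)
  have el: "2.718 \<le> exp (1::real)" and eu: "exp (1::real) \<le> 2.7183" using e unfolding abs_le_iff by auto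
  have "2.718^3 \<le> exp (1::real)^3" by (rule power_mono[OF el]) simp
  moreover have "(20.079::real) \<le> 2.718^3" by (simp add: eval_nat_numeral)
  ultimately have E1: "20.079 \<le> exp (3::real)" using e3 by linarith
  have "exp (1::real)^3 \<le> 2.7183^3" by (rule power_mono[OF eu]) simp
  moreover have "(2.7183::real)^3 \<le> 20.087" by (simp add: eval_nat_numeral)
  ultimately have E2: "exp (3::real) \<le> 20.087" using e3 by linarith
  have P1: "9.8696 \<le> pi^2" using power_mono[OF p1(1), of 2] by (simp add: eval_nat_numeral)
  have P2: "pi^2 \<le> 9.8697" using power_mono[OF p1(2), of 2] by (simp add: eval_nat_numeral)
  have "pi^2 / exp 3 \<le> 9.8697 / 20.079"
    using P1 P2 E1 E2 by (intro frac_le) auto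
  then show "502/1000 \<le> cc" unfolding cc_def by simp
  have "9.8696 / 20.087 \<le> pi^2 / exp 3"
    using P1 P2 E1 E2 by (intro frac_le) auto
  then show "cc \<le> 51/100" unfolding cc_def by simp
qed

lemma w_odd_c: "odd m \<Longrightarrow> w (m+1) = \<lfloor>sqrt 2 * (real_of_int (w m) + cc)\<rfloor>"
proof -
  assume "odd m"
  then obtain k where m: "m = Suc k" by (cases m) auto
  show ?thesis using \<open>odd m\<close> unfolding m cc_def by (simp add: algebra_simps)
qed

lemma w_even: "even m \<Longrightarrow> m \<ge> 1 \<Longrightarrow> w (m+1) = \<lfloor>sqrt 2 * (real_of_int (w m) + 1/2)\<rfloor>"
proof -
  assume "even m" "m \<ge> 1"
  then obtain k where m: "m = Suc k" by (cases m) auto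
  show ?thesis using \<open>even m\<close> unfolding m by simp
qed

lemma sq_lo:
  fixes b x :: real
  assumes "0 \<le> b" "x^2 \<le> 2*b^2"
  shows "x \<le> sqrt 2 * b"
proof -
  have s: "sqrt 2 * b = sqrt (2*b^2)" using assms(1) by (simp add: real_sqrt_mult)
  show ?thesis unfolding s using assms by (simp add: real_le_rsqrt)
qed

lemma sq_hi:
  fixes b x :: real
  assumes "0 \<le> b" "0 \<le> x" "2*b^2 < x^2"
  shows "sqrt 2 * b < x"
proof -
  have s: "sqrt 2 * b = sqrt (2*b^2)" using assms(1) by (simp add: real_sqrt_mult)
  show ?thesis unfolding s using assms by (simp add: real_less_lsqrt)
qed

lemma w_odd_c2: "odd m \<Longrightarrow> m' = m+1 \<Longrightarrow> w m' = \<lfloor>sqrt 2 * (real_of_int (w m) + cc)\<rfloor>"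
  using w_odd_c by simp

lemma w_even2: "even m \<Longrightarrow> m \<ge> 1 \<Longrightarrow> m' = m+1 \<Longrightarrow> w m' = \<lfloor>sqrt 2 * (real_of_int (w m) + 1/2)\<rfloor>"
  using w_even by simp

lemma fl_sqrt2: 
  fixes a :: real and k :: int
  assumes "0 \<le> k" "0 \<le> a" "(real_of_int k)^2 \<le> 2*a^2" "2*a^2 < (real_of_int k+1)^2"
  shows "\<lfloor>sqrt 2 * a\<rfloor> = k"
proof -
  have "real_of_int k \<le> sqrt 2 * a" using assms by (intro sq_lo) auto
  moreover have "sqrt 2 * a < real_of_int k + 1" using assms by (intro sq_hi) auto
  ultimately show ?thesis by (simp add: floor_eq_iff)
qed

lemma step_h:
  fixes a k :: int
  assumes "0 \<le> k" "0 \<le> a" "(real_of_int k)^2 \<le> 2*(real_of_int a + 1/2)^2"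
    "2*(real_of_int a + 1/2)^2 < (real_of_int k+1)^2"
  shows "\<lfloor>sqrt 2 * (real_of_int a + 1/2)\<rfloor> = k"
  using assms by (intro fl_sqrt2) auto

lemma step_c:
  fixes a k :: int
  assumes "0 \<le> k" "0 \<le> a" "(real_of_int k)^2 \<le> 2*(real_of_int a + 502/1000)^2"
    "2*(real_of_int a + 51/100)^2 < (real_of_int k+1)^2"
  shows "\<lfloor>sqrt 2 * (real_of_int a + cc)\<rfloor> = k"
proof -
  have lo: "real_of_int k \<le> sqrt 2 * (real_of_int a + 502/1000)"
    using assms by (intro sq_lo) auto
  have hi: "sqrt 2 * (real_of_int a + 51/100) < real_of_int k + 1"
    using assms by (intro sq_hi) auto
  have "sqrt 2 * (real_of_int a + 502/1000) \<le> sqrt 2 * (real_of_int a + cc)"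
    using cc_bounds by (intro mult_left_mono) auto
  moreover have "sqrt 2 * (real_of_int a + cc) \<le> sqrt 2 * (real_of_int a + 51/100)"
    using cc_bounds by (intro mult_left_mono) auto
  ultimately show ?thesis unfolding floor_eq_iff using lo hi by linarith
qed

lemma w_1: "w 1 = 1" by simp

lemma w_2: "w 2 = 2"
proof -
  have "\<lfloor>sqrt 2 * (real_of_int 1 + cc)\<rfloor> = 2" by (rule step_c) (simp_all add: power2_eq_square)
  then show ?thesis using w_odd_c2[of 1 2] w_1 by (simp del: w.simps)
qed

lemma w_3: "w 3 = 3"
proof -
  have "\<lfloor>sqrt 2 * (real_of_int 2 + 1/2)\<rfloor> = 3" by (rule step_h) (simp_all add: power2_eq_square)
  then show ?thesis using w_even2[of 2 3] w_2 by (simp del: w.simps)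
qed

lemma w_4: "w 4 = 4"
proof -
  have "\<lfloor>sqrt 2 * (real_of_int 3 + cc)\<rfloor> = 4" by (rule step_c) (simp_all add: power2_eq_square)
  then show ?thesis using w_odd_c2[of 3 4] w_3 by (simp del: w.simps)
qed

lemma w_5: "w 5 = 6"
proof -
  have "\<lfloor>sqrt 2 * (real_of_int 4 + 1/2)\<rfloor> = 6" by (rule step_h) (simp_all add: power2_eq_square)
  then show ?thesis using w_even2[of 4 5] w_4 by (simp del: w.simps)
qed

lemma w_6: "w 6 = 9"
proof -
  have "\<lfloor>sqrt 2 * (real_of_int 6 + cc)\<rfloor> = 9" by (rule step_c) (simp_all add: power2_eq_square)
  then show ?thesis using w_odd_c2[of 5 6] w_5 by (simp del: w.simps)
qed

lemma w_7: "w 7 = 13"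
proof -
  have "\<lfloor>sqrt 2 * (real_of_int 9 + 1/2)\<rfloor> = 13" by (rule step_h) (simp_all add: power2_eq_square)
  then show ?thesis using w_even2[of 6 7] w_6 by (simp del: w.simps)
qed

lemma w_8: "w 8 = 19"
proof -
  have "\<lfloor>sqrt 2 * (real_of_int 13 + cc)\<rfloor> = 19" by (rule step_c) (simp_all add: power2_eq_square)
  then show ?thesis using w_odd_c2[of 7 8] w_7 by (simp del: w.simps)
qed

lemma w_9: "w 9 = 27"
proof -
  have "\<lfloor>sqrt 2 * (real_of_int 19 + 1/2)\<rfloor> = 27" by (rule step_h) (simp_all add: power2_eq_square)
  then show ?thesis using w_even2[of 8 9] w_8 by (simp del: w.simps)
qed

lemma w_10: "w 10 = 38"
proof -
  have "\<lfloor>sqrt 2 * (real_of_int 27 + cc)\<rfloor> = 38" by (rule step_c) (simp_all add: power2_eq_square)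
  then show ?thesis using w_odd_c2[of 9 10] w_9 by (simp del: w.simps)
qed

lemma w_11: "w 11 = 54"
proof -
  have "\<lfloor>sqrt 2 * (real_of_int 38 + 1/2)\<rfloor> = 54" by (rule step_h) (simp_all add: power2_eq_square)
  then show ?thesis using w_even2[of 10 11] w_10 by (simp del: w.simps)
qed

lemma w_12: "w 12 = 77"
proof -
  have "\<lfloor>sqrt 2 * (real_of_int 54 + cc)\<rfloor> = 77" by (rule step_c) (simp_all add: power2_eq_square)
  then show ?thesis using w_odd_c2[of 11 12] w_11 by (simp del: w.simps)
qed

lemma w_13: "w 13 = 109"
proof -
  have "\<lfloor>sqrt 2 * (real_of_int 77 + 1/2)\<rfloor> = 109" by (rule step_h) (simp_all add: power2_eq_square)
  then show ?thesis using w_even2[of 12 13] w_12 by (simp del: w.simps)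
qed

lemma w_14: "w 14 = 154"
proof -
  have "\<lfloor>sqrt 2 * (real_of_int 109 + cc)\<rfloor> = 154" by (rule step_c) (simp_all add: power2_eq_square)
  then show ?thesis using w_odd_c2[of 13 14] w_13 by (simp del: w.simps)
qed

lemma w_15: "w 15 = 218"
proof -
  have "\<lfloor>sqrt 2 * (real_of_int 154 + 1/2)\<rfloor> = 218" by (rule step_h) (simp_all add: power2_eq_square)
  then show ?thesis using w_even2[of 14 15] w_14 by (simp del: w.simps)
qed

lemma w_16: "w 16 = 309"
proof -
  have "\<lfloor>sqrt 2 * (real_of_int 218 + cc)\<rfloor> = 309" by (rule step_c) (simp_all add: power2_eq_square)
  then show ?thesis using w_odd_c2[of 15 16] w_15 by (simp del: w.simps)
qed

lemma w_17: "w 17 = 437"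
proof -
  have "\<lfloor>sqrt 2 * (real_of_int 309 + 1/2)\<rfloor> = 437" by (rule step_h) (simp_all add: power2_eq_square)
  then show ?thesis using w_even2[of 16 17] w_16 by (simp del: w.simps)
qed

lemma w_18: "w 18 = 618"
proof -
  have "\<lfloor>sqrt 2 * (real_of_int 437 + cc)\<rfloor> = 618" by (rule step_c) (simp_all add: power2_eq_square)
  then show ?thesis using w_odd_c2[of 17 18] w_17 by (simp del: w.simps)
qed

lemma w_19: "w 19 = 874"
proof -
  have "\<lfloor>sqrt 2 * (real_of_int 618 + 1/2)\<rfloor> = 874" by (rule step_h) (simp_all add: power2_eq_square)
  then show ?thesis using w_even2[of 18 19] w_18 by (simp del: w.simps)
qed

lemma w_20: "w 20 = 1236"
proof -
  have "\<lfloor>sqrt 2 * (real_of_int 874 + cc)\<rfloor> = 1236" by (rule step_c) (simp_all add: power2_eq_square)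
  then show ?thesis using w_odd_c2[of 19 20] w_19 by (simp del: w.simps)
qed

lemma w_21: "w 21 = 1748"
proof -
  have "\<lfloor>sqrt 2 * (real_of_int 1236 + 1/2)\<rfloor> = 1748" by (rule step_h) (simp_all add: power2_eq_square)
  then show ?thesis using w_even2[of 20 21] w_20 by (simp del: w.simps)
qed

lemma w_22: "w 22 = 2472"
proof -
  have "\<lfloor>sqrt 2 * (real_of_int 1748 + cc)\<rfloor> = 2472" by (rule step_c) (simp_all add: power2_eq_square)
  then show ?thesis using w_odd_c2[of 21 22] w_21 by (simp del: w.simps)
qed

lemma w_23: "w 23 = 3496"
proof -
  have "\<lfloor>sqrt 2 * (real_of_int 2472 + 1/2)\<rfloor> = 3496" by (rule step_h) (simp_all add: power2_eq_square)
  then show ?thesis using w_even2[of 22 23] w_22 by (simp del: w.simps)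
qed

lemma w_24: "w 24 = 4944"
proof -
  have "\<lfloor>sqrt 2 * (real_of_int 3496 + cc)\<rfloor> = 4944" by (rule step_c) (simp_all add: power2_eq_square)
  then show ?thesis using w_odd_c2[of 23 24] w_23 by (simp del: w.simps)
qed

lemma w_25: "w 25 = 6992"
proof -
  have "\<lfloor>sqrt 2 * (real_of_int 4944 + 1/2)\<rfloor> = 6992" by (rule step_h) (simp_all add: power2_eq_square)
  then show ?thesis using w_even2[of 24 25] w_24 by (simp del: w.simps)
qed

lemma w_26: "w 26 = 9888"
proof -
  have "\<lfloor>sqrt 2 * (real_of_int 6992 + cc)\<rfloor> = 9888" by (rule step_c) (simp_all add: power2_eq_square)
  then show ?thesis using w_odd_c2[of 25 26] w_25 by (simp del: w.simps)
qed

lemma w_27: "w 27 = 13984"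
proof -
  have "\<lfloor>sqrt 2 * (real_of_int 9888 + 1/2)\<rfloor> = 13984" by (rule step_h) (simp_all add: power2_eq_square)
  then show ?thesis using w_even2[of 26 27] w_26 by (simp del: w.simps)
qed

lemma w_28: "w 28 = 19777"
proof -
  have "\<lfloor>sqrt 2 * (real_of_int 13984 + cc)\<rfloor> = 19777" by (rule step_c) (simp_all add: power2_eq_square)
  then show ?thesis using w_odd_c2[of 27 28] w_27 by (simp del: w.simps)
qed

lemma w_29: "w 29 = 27969"
proof -
  have "\<lfloor>sqrt 2 * (real_of_int 19777 + 1/2)\<rfloor> = 27969" by (rule step_h) (simp_all add: power2_eq_square)
  then show ?thesis using w_even2[of 28 29] w_28 by (simp del: w.simps)
qed

lemma w_30: "w 30 = 39554"
proof -
  have "\<lfloor>sqrt 2 * (real_of_int 27969 + cc)\<rfloor> = 39554" by (rule step_c) (simp_all add: power2_eq_square)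
  then show ?thesis using w_odd_c2[of 29 30] w_29 by (simp del: w.simps)
qed

lemma w_31: "w 31 = 55938"
proof -
  have "\<lfloor>sqrt 2 * (real_of_int 39554 + 1/2)\<rfloor> = 55938" by (rule step_h) (simp_all add: power2_eq_square)
  then show ?thesis using w_even2[of 30 31] w_30 by (simp del: w.simps)
qed

lemma w_32: "w 32 = 79108"
proof -
  have "\<lfloor>sqrt 2 * (real_of_int 55938 + cc)\<rfloor> = 79108" by (rule step_c) (simp_all add: power2_eq_square)
  then show ?thesis using w_odd_c2[of 31 32] w_31 by (simp del: w.simps)
qed

lemma w_33: "w 33 = 111876"
proof -
  have "\<lfloor>sqrt 2 * (real_of_int 79108 + 1/2)\<rfloor> = 111876" by (rule step_h) (simp_all add: power2_eq_square)
  then show ?thesis using w_even2[of 32 33] w_32 by (simp del: w.simps)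
qed

lemma w_34: "w 34 = 158217"
proof -
  have "\<lfloor>sqrt 2 * (real_of_int 111876 + cc)\<rfloor> = 158217" by (rule step_c) (simp_all add: power2_eq_square)
  then show ?thesis using w_odd_c2[of 33 34] w_33 by (simp del: w.simps)
qed

lemma w_35: "w 35 = 223753"
proof -
  have "\<lfloor>sqrt 2 * (real_of_int 158217 + 1/2)\<rfloor> = 223753" by (rule step_h) (simp_all add: power2_eq_square)
  then show ?thesis using w_even2[of 34 35] w_34 by (simp del: w.simps)
qed

lemma w_36: "w 36 = 316435"
proof -
  have "\<lfloor>sqrt 2 * (real_of_int 223753 + cc)\<rfloor> = 316435" by (rule step_c) (simp_all add: power2_eq_square)
  then show ?thesis using w_odd_c2[of 35 36] w_35 by (simp del: w.simps)
qed

lemma w_37: "w 37 = 447507"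
proof -
  have "\<lfloor>sqrt 2 * (real_of_int 316435 + 1/2)\<rfloor> = 447507" by (rule step_h) (simp_all add: power2_eq_square)
  then show ?thesis using w_even2[of 36 37] w_36 by (simp del: w.simps)
qed

lemma w_38: "w 38 = 632871"
proof -
  have "\<lfloor>sqrt 2 * (real_of_int 447507 + cc)\<rfloor> = 632871" by (rule step_c) (simp_all add: power2_eq_square)
  then show ?thesis using w_odd_c2[of 37 38] w_37 by (simp del: w.simps)
qed

lemma w_39: "w 39 = 895015"
proof -
  have "\<lfloor>sqrt 2 * (real_of_int 632871 + 1/2)\<rfloor> = 895015" by (rule step_h) (simp_all add: power2_eq_square)
  then show ?thesis using w_even2[of 38 39] w_38 by (simp del: w.simps)
qed

lemma w_40: "w 40 = 1265743"
proof -
  have "\<lfloor>sqrt 2 * (real_of_int 895015 + cc)\<rfloor> = 1265743" by (rule step_c) (simp_all add: power2_eq_square)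
  then show ?thesis using w_odd_c2[of 39 40] w_39 by (simp del: w.simps)
qed

lemma w_41: "w 41 = 1790031"
proof -
  have "\<lfloor>sqrt 2 * (real_of_int 1265743 + 1/2)\<rfloor> = 1790031" by (rule step_h) (simp_all add: power2_eq_square)
  then show ?thesis using w_even2[of 40 41] w_40 by (simp del: w.simps)
qed

lemma w_42: "w 42 = 2531486"
proof -
  have "\<lfloor>sqrt 2 * (real_of_int 1790031 + cc)\<rfloor> = 2531486" by (rule step_c) (simp_all add: power2_eq_square)
  then show ?thesis using w_odd_c2[of 41 42] w_41 by (simp del: w.simps)
qed

lemma w_43: "w 43 = 3580062"
proof -
  have "\<lfloor>sqrt 2 * (real_of_int 2531486 + 1/2)\<rfloor> = 3580062" by (rule step_h) (simp_all add: power2_eq_square)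
  then show ?thesis using w_even2[of 42 43] w_42 by (simp del: w.simps)
qed

lemma w_44: "w 44 = 5062972"
proof -
  have "\<lfloor>sqrt 2 * (real_of_int 3580062 + cc)\<rfloor> = 5062972" by (rule step_c) (simp_all add: power2_eq_square)
  then show ?thesis using w_odd_c2[of 43 44] w_43 by (simp del: w.simps)
qed

lemma w_45: "w 45 = 7160124"
proof -
  have "\<lfloor>sqrt 2 * (real_of_int 5062972 + 1/2)\<rfloor> = 7160124" by (rule step_h) (simp_all add: power2_eq_square)
  then show ?thesis using w_even2[of 44 45] w_44 by (simp del: w.simps)
qed

lemma w_46: "w 46 = 10125945"
proof -
  have "\<lfloor>sqrt 2 * (real_of_int 7160124 + cc)\<rfloor> = 10125945" by (rule step_c) (simp_all add: power2_eq_square)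
  then show ?thesis using w_odd_c2[of 45 46] w_45 by (simp del: w.simps)
qed

lemma w_47: "w 47 = 14320249"
proof -
  have "\<lfloor>sqrt 2 * (real_of_int 10125945 + 1/2)\<rfloor> = 14320249" by (rule step_h) (simp_all add: power2_eq_square)
  then show ?thesis using w_even2[of 46 47] w_46 by (simp del: w.simps)
qed

lemma w_48: "w 48 = 20251891"
proof -
  have "\<lfloor>sqrt 2 * (real_of_int 14320249 + cc)\<rfloor> = 20251891" by (rule step_c) (simp_all add: power2_eq_square)
  then show ?thesis using w_odd_c2[of 47 48] w_47 by (simp del: w.simps)
qed

lemma w_49: "w 49 = 28640499"
proof -
  have "\<lfloor>sqrt 2 * (real_of_int 20251891 + 1/2)\<rfloor> = 28640499" by (rule step_h) (simp_all add: power2_eq_square)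
  then show ?thesis using w_even2[of 48 49] w_48 by (simp del: w.simps)
qed

lemma w_50: "w 50 = 40503782"
proof -
  have "\<lfloor>sqrt 2 * (real_of_int 28640499 + cc)\<rfloor> = 40503782" by (rule step_c) (simp_all add: power2_eq_square)
  then show ?thesis using w_odd_c2[of 49 50] w_49 by (simp del: w.simps)
qed

lemma w_51: "w 51 = 57280998"
proof -
  have "\<lfloor>sqrt 2 * (real_of_int 40503782 + 1/2)\<rfloor> = 57280998" by (rule step_h) (simp_all add: power2_eq_square)
  then show ?thesis using w_even2[of 50 51] w_50 by (simp del: w.simps)
qed

lemma w_52: "w 52 = 81007564"
proof -
  have "\<lfloor>sqrt 2 * (real_of_int 57280998 + cc)\<rfloor> = 81007564" by (rule step_c) (simp_all add: power2_eq_square)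
  then show ?thesis using w_odd_c2[of 51 52] w_51 by (simp del: w.simps)
qed

lemma w_53: "w 53 = 114561996"
proof -
  have "\<lfloor>sqrt 2 * (real_of_int 81007564 + 1/2)\<rfloor> = 114561996" by (rule step_h) (simp_all add: power2_eq_square)
  then show ?thesis using w_even2[of 52 53] w_52 by (simp del: w.simps)
qed

lemma w_54: "w 54 = 162015129"
proof -
  have "\<lfloor>sqrt 2 * (real_of_int 114561996 + cc)\<rfloor> = 162015129" by (rule step_c) (simp_all add: power2_eq_square)
  then show ?thesis using w_odd_c2[of 53 54] w_53 by (simp del: w.simps)
qed

lemma w_55: "w 55 = 229123993"
proof -
  have "\<lfloor>sqrt 2 * (real_of_int 162015129 + 1/2)\<rfloor> = 229123993" by (rule step_h) (simp_all add: power2_eq_square)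
  then show ?thesis using w_even2[of 54 55] w_54 by (simp del: w.simps)
qed

lemma w_56: "w 56 = 324030259"
proof -
  have "\<lfloor>sqrt 2 * (real_of_int 229123993 + cc)\<rfloor> = 324030259" by (rule step_c) (simp_all add: power2_eq_square)
  then show ?thesis using w_odd_c2[of 55 56] w_55 by (simp del: w.simps)
qed

lemma w_57: "w 57 = 458247987"
proof -
  have "\<lfloor>sqrt 2 * (real_of_int 324030259 + 1/2)\<rfloor> = 458247987" by (rule step_h) (simp_all add: power2_eq_square)
  then show ?thesis using w_even2[of 56 57] w_56 by (simp del: w.simps)
qed

lemma w_58: "w 58 = 648060518"
proof -
  have "\<lfloor>sqrt 2 * (real_of_int 458247987 + cc)\<rfloor> = 648060518" by (rule step_c) (simp_all add: power2_eq_square)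
  then show ?thesis using w_odd_c2[of 57 58] w_57 by (simp del: w.simps)
qed

lemma w_59: "w 59 = 916495974"
proof -
  have "\<lfloor>sqrt 2 * (real_of_int 648060518 + 1/2)\<rfloor> = 916495974" by (rule step_h) (simp_all add: power2_eq_square)
  then show ?thesis using w_even2[of 58 59] w_58 by (simp del: w.simps)
qed

lemma w_60: "w 60 = 1296121037"
proof -
  have "\<lfloor>sqrt 2 * (real_of_int 916495974 + cc)\<rfloor> = 1296121037" by (rule step_c) (simp_all add: power2_eq_square)
  then show ?thesis using w_odd_c2[of 59 60] w_59 by (simp del: w.simps)
qed

lemma w_61: "w 61 = 1832991949"
proof -
  have "\<lfloor>sqrt 2 * (real_of_int 1296121037 + 1/2)\<rfloor> = 1832991949" by (rule step_h) (simp_all add: power2_eq_square)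
  then show ?thesis using w_even2[of 60 61] w_60 by (simp del: w.simps)
qed

lemma s_bounds: "1.414 \<le> sqrt (2::real)" "sqrt (2::real) \<le> 1.4143"
proof -
  show "1.414 \<le> sqrt (2::real)" using sq_lo[of 1 "1.414"] by (simp add: power2_eq_square)
  show "sqrt (2::real) \<le> 1.4143" using sq_hi[of 1 "1.4143"] by (simp add: power2_eq_square)
qed

lemma key:
  fixes t :: real and u L :: int
  assumes t: "t = real_of_int L * (1 + sqrt 2)" and u: "u = \<lfloor>t\<rfloor>"
  shows "\<lfloor>sqrt 2 * (real_of_int u + cc)\<rfloor> = u + L"
    and "\<lfloor>sqrt 2 * (real_of_int (u + L) + 1/2)\<rfloor> = \<lfloor>2*t\<rfloor>"
proof -
  define s where "s = sqrt (2::real)"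
  define g where "g = t - real_of_int u"
  have ss: "s * s = 2" unfolding s_def by simp
  have sb: "1.414 \<le> s" "s \<le> 1.4143" using s_bounds unfolding s_def by auto
  have g0: "0 \<le> g" "g < 1" unfolding g_def u by linarith+
  have st: "s * t = t + real_of_int L" unfolding t
    by (simp add: algebra_simps ss flip: s_def)
  have e1: "s * (real_of_int u + cc) = real_of_int (u + L) + (g + s*(cc - g))"
  proof -
    have "s * (real_of_int u + cc) = s * t + s * (cc - g)" unfolding g_def by (simp add: algebra_simps)
    then show ?thesis using st unfolding g_def by (simp add: algebra_simps)
  qed
  have c1: "1.414 * 0.502 \<le> s * cc" using cc_bounds sb by (intro mult_mono) auto
  have c2: "s * cc \<le> 1.4143 * 0.51" using cc_bounds sb by (intro mult_mono) auto
  have c3: "g * (s - 1) \<le> 1 * 0.4143" using g0 sb by (intro mult_mono) auto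
  have c4: "0 \<le> g * (s - 1)" using g0 sb by simp
  have "0 \<le> g + s*(cc - g)" "g + s*(cc - g) < 1"
    using c1 c2 c3 c4 by (simp_all add: algebra_simps)
  then show "\<lfloor>sqrt 2 * (real_of_int u + cc)\<rfloor> = u + L"
    unfolding s_def[symmetric] e1 floor_eq_iff by simp
  have e2: "s * (real_of_int (u + L) + 1/2) = 2 * real_of_int u + (2*g + s*(1/2 - g))"
  proof -
    have "s * (real_of_int (u + L) + 1/2) = s * t + s * real_of_int L - s*g + s/2"
      unfolding g_def by (simp add: algebra_simps)
    also have "s * real_of_int L = t - real_of_int L" unfolding t by (simp add: algebra_simps flip: s_def)
    finally show ?thesis using st unfolding g_def by (simp add: algebra_simps)
  qed
  have e3: "2 * t = 2 * real_of_int u + 2 * g" unfolding g_def by simp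
  show "\<lfloor>sqrt 2 * (real_of_int (u + L) + 1/2)\<rfloor> = \<lfloor>2*t\<rfloor>"
  proof (cases "g < 1/2")
    case True
    have d1: "0 < (1/2 - g) * (2 - s)" using True g0 sb by simp
    have d2: "0 \<le> g * (2 - s)" using g0 sb by simp
    have "0 \<le> 2*g + s*(1/2 - g)" "2*g + s*(1/2 - g) < 1" "0 \<le> 2*g" "2*g < 1"
      using d1 d2 sb True g0 by (simp_all add: algebra_simps field_simps)
    then have "\<lfloor>2 * real_of_int u + (2*g + s*(1/2 - g))\<rfloor> = 2*u"
      "\<lfloor>2 * real_of_int u + 2 * g\<rfloor> = 2*u" unfolding floor_eq_iff by auto
    then show ?thesis unfolding s_def[symmetric] e2 e3 by simp
  next
    case False
    have d1: "(g - 1/2) * (2 - s) \<le> (1/2) * (2 - 1.414)" using False g0 sb by (intro mult_mono) auto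
    have d2: "0 \<le> (g - 1/2) * (2 - s)" using g0 sb False by simp
    have "1 \<le> 2*g + s*(1/2 - g)" "2*g + s*(1/2 - g) < 2" "1 \<le> 2*g" "2*g < 2"
      using d1 d2 sb False g0 by (simp_all add: algebra_simps field_simps)
    then have "\<lfloor>2 * real_of_int u + (2*g + s*(1/2 - g))\<rfloor> = 2*u + 1"
      "\<lfloor>2 * real_of_int u + 2 * g\<rfloor> = 2*u + 1" unfolding floor_eq_iff by auto
    then show ?thesis unfolding s_def[symmetric] e2 e3 by simp
  qed
qed

definition KK :: int where "KK = 759250125"

lemma w_61': "w 61 = \<lfloor>real_of_int KK * (1 + sqrt 2)\<rfloor>"
proof -
  have a: "1073741824 \<le> sqrt 2 * (759250125::real)" by (rule sq_lo) (simp_all add: power2_eq_square)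
  have b: "sqrt 2 * (759250125::real) < 1073741825" by (rule sq_hi) (simp_all add: power2_eq_square)
  have "\<lfloor>real_of_int KK * (1 + sqrt 2)\<rfloor> = 1832991949"
    unfolding KK_def floor_eq_iff using a b by (simp add: algebra_simps)
  then show ?thesis using w_61 by simp
qed

lemma w_closed: "w (61 + 2*m) = \<lfloor>real_of_int (KK * 2^m) * (1 + sqrt 2)\<rfloor>"
proof (induction m)
  case 0
  then show ?case using w_61' by simp
next
  case (Suc m)
  define t where "t = real_of_int (KK * 2^m) * (1 + sqrt 2)"
  have k1: "\<lfloor>sqrt 2 * (real_of_int (w (61+2*m)) + cc)\<rfloor> = w (61+2*m) + KK*2^m"
    using key(1)[OF t_def] Suc.IH unfolding t_def by simp
  have k2: "\<lfloor>sqrt 2 * (real_of_int (w (61+2*m) + KK*2^m) + 1/2)\<rfloor> = \<lfloor>2*t\<rfloor>"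
    using key(2)[OF t_def] Suc.IH unfolding t_def by simp
  have o: "w (62+2*m) = w (61+2*m) + KK*2^m"
    using w_odd_c2[of "61+2*m" "62+2*m"] k1 by simp
  have "w (63+2*m) = \<lfloor>2*t\<rfloor>"
    using w_even2[of "62+2*m" "63+2*m"] k2 o by simp
  moreover have "2*t = real_of_int (KK * 2^Suc m) * (1 + sqrt 2)" unfolding t_def by simp
  moreover have "61 + 2 * Suc m = 63 + 2*m" by simp
  ultimately show ?case by simp
qed

lemma floor_double: "\<lfloor>2*y\<rfloor> - 2*\<lfloor>y\<rfloor> = \<lfloor>2*y\<rfloor> mod 2"
proof -
  have "2*\<lfloor>y\<rfloor> \<le> \<lfloor>2*y\<rfloor>" "\<lfloor>2*y\<rfloor> \<le> 2*\<lfloor>y\<rfloor> + 1"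
    by (simp_all add: le_floor_iff floor_le_iff) linarith+
  then have "\<lfloor>2*y\<rfloor> = 2*\<lfloor>y\<rfloor> \<or> \<lfloor>2*y\<rfloor> = 2*\<lfloor>y\<rfloor> + 1" by linarith
  then show ?thesis by auto
qed

theorem corollary3p3:
  fixes n :: nat
  assumes "n \<ge> 31"
  shows "w (2*n+1) - 2 * w (2*n-1) = binary_digit (759250125 * sqrt 2) (n+1)"
proof -
  obtain m where n: "n = m + 31" using assms by (metis add.commute le_Suc_ex)
  define x :: real where "x = 759250125 * sqrt 2"
  define y where "y = x * 2^m"
  have a: "1073741824 \<le> x" unfolding x_def using sq_lo[of "759250125::real" 1073741824]
    by (simp add: power2_eq_square mult.commute)
  have b: "x < 2147483648" unfolding x_def using sq_hi[of "759250125::real" 2147483648]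
    by (simp add: power2_eq_square mult.commute)
  have lg: "\<lfloor>log 2 x\<rfloor> = 30"
    using a b by (subst floor_log_eq_powr_iff) (simp_all add: powr_realpow)
  have ex: "int (n+1) - 1 - 30 = int (m+1)" unfolding n by simp
  have r: "binary_digit x (n+1) = \<lfloor>2*y\<rfloor> mod 2"
  proof -
    have p: "(2::real) powi (int (n+1) - 1 - 30) = 2^(m+1)" unfolding ex by (simp only: power_int_of_nat)
    show ?thesis unfolding binary_digit_def lg p y_def by (simp add: algebra_simps)
  qed
  have t1: "\<lfloor>real_of_int (KK * 2^m) * (1 + sqrt 2)\<rfloor> = \<lfloor>y\<rfloor> + KK*2^m"
  proof -
    have "real_of_int (KK * 2^m) * (1 + sqrt 2) = y + real_of_int (KK*2^m)"
      unfolding y_def x_def KK_def by (simp add: algebra_simps)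
    then show ?thesis by (simp only: floor_add_int)
  qed
  have t2: "\<lfloor>real_of_int (KK * 2^Suc m) * (1 + sqrt 2)\<rfloor> = \<lfloor>2*y\<rfloor> + 2*(KK*2^m)"
  proof -
    have "real_of_int (KK * 2^Suc m) * (1 + sqrt 2) = 2*y + real_of_int (2*(KK*2^m))"
      unfolding y_def x_def KK_def by (simp add: algebra_simps)
    then show ?thesis by (simp only: floor_add_int)
  qed
  have i1: "2*n-1 = 61 + 2*m" "2*n+1 = 61 + 2*Suc m" unfolding n by simp_all
  show ?thesis
    unfolding i1 w_closed t1 t2 x_def[symmetric] r using floor_double[of y] by simp
qed

end
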